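(* Valuated flag gammoids are closed under translation: if $\boldsymbol\mu=(\mu_1,\dots,\mu_s)$ is a valuated flag gammoid on $[n]$ and $x\in\mathbb{R}^n$, then $\boldsymbol\mu+x=(\mu_1+x,\dots,\mu_s+x)$, where $(\mu_j+x)(B)=\mu_j(B)+\sum_{i\in B}x_i$, is a valuated flag gammoid.
   Context: A valuated flag gammoid is a tuple $(\mu_1,\dots,\mu_s)$ arising as follows: $\Gamma=(V,E)$ is a finite directed graph with $[n]\subseteq V$, $w:E\to\mathbb{R}$ edge weights with no negative-weight directed cycle, $S_1\subset\dots\subset S_s\subseteq V$ with $|S_j|=d_j$ such that some subset of $[n]$ has a linking onto each $S_j$, and $\mu_j(I)$, for $I\in\binom{[n]}{d_j}$, is the minimum total weight of a linking from $I$ onto $S_j$ ($\infty$ if none). A linking from $I$ onto $J$ is a family of $|I|=|J|$ pairwise vertex-disjoint directed paths (length 0 allowed) from the vertices of $I$ to the vertices of $J$. *)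

theory Defs
  imports Main "HOL-Library.Extended_Real"
begin

definition is_walk :: "(nat \<times> nat) set \<Rightarrow> nat list \<Rightarrow> bool" where
  "is_walk E p \<longleftrightarrow> p \<noteq> [] \<and> (\<forall>k < length p - 1. (p ! k, p ! Suc k) \<in> E)"

definition is_path :: "(nat \<times> nat) set \<Rightarrow> nat list \<Rightarrow> bool" where
  "is_path E p \<longleftrightarrow> is_walk E p \<and> distinct p"

definition walk_weight :: "(nat \<times> nat \<Rightarrow> real) \<Rightarrow> nat list \<Rightarrow> real" where
  "walk_weight w p = (\<Sum>k < length p - 1. w (p ! k, p ! Suc k))"

definition no_neg_cycle :: "(nat \<times> nat) set \<Rightarrow> (nat \<times> nat \<Rightarrow> real) \<Rightarrow> bool" where
  "no_neg_cycle E w \<longleftrightarrow>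
     (\<forall>p. is_walk E p \<and> length p \<ge> 2 \<and> hd p = last p \<longrightarrow> walk_weight w p \<ge> 0)"

definition is_linking :: "(nat \<times> nat) set \<Rightarrow> nat set \<Rightarrow> nat set \<Rightarrow> (nat \<Rightarrow> nat list) \<Rightarrow> bool" where
  "is_linking E I J P \<longleftrightarrow> finite I \<and> card I = card J \<and>
     (\<forall>i\<in>I. is_path E (P i) \<and> hd (P i) = i) \<and>
     (\<lambda>i. last (P i)) ` I = J \<and>
     (\<forall>i\<in>I. \<forall>i'\<in>I. i \<noteq> i' \<longrightarrow> set (P i) \<inter> set (P i') = {})"

(* minimum weight of a linking from I onto J; Inf of the empty set is \<infinity> *)
definition min_link_weight ::
  "(nat \<times> nat) set \<Rightarrow> (nat \<times> nat \<Rightarrow> real) \<Rightarrow> nat set \<Rightarrow> nat set \<Rightarrow> ereal" where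
  "min_link_weight E w I J =
     (INF P \<in> {P. is_linking E I J P}. ereal (\<Sum>i\<in>I. walk_weight w (P i)))"

(* mus = [mu_1,...,mu_s]; mu_j is only constrained on d_j-subsets of [n] *)
definition valuated_flag_gammoid :: "nat \<Rightarrow> (nat set \<Rightarrow> ereal) list \<Rightarrow> bool" where
  "valuated_flag_gammoid n mus \<longleftrightarrow>
     (\<exists>(V :: nat set) E w (S :: nat set list).
        finite V \<and> {1..n} \<subseteq> V \<and> E \<subseteq> V \<times> V \<and> no_neg_cycle E w \<and>
        length S = length mus \<and>
        (\<forall>j < length S. S ! j \<subseteq> V) \<and>
        (\<forall>j. Suc j < length S \<longrightarrow> S ! j \<subset> S ! Suc j) \<and>
        (\<forall>j < length S. \<exists>I \<subseteq> {1..n}. \<exists>P. is_linking E I (S ! j) P) \<and>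
        (\<forall>j < length mus. \<forall>I. I \<subseteq> {1..n} \<and> card I = card (S ! j) \<longrightarrow>
            (mus ! j) I = min_link_weight E w I (S ! j)))"

definition translate_val :: "(nat \<Rightarrow> real) \<Rightarrow> (nat set \<Rightarrow> ereal) \<Rightarrow> (nat set \<Rightarrow> ereal)" where
  "translate_val x mu = (\<lambda>B. mu B + ereal (\<Sum>i\<in>B. x i))"

end

theory Submission
  imports Defs
begin

lemma INF_add_real:
  fixes f :: "'a \<Rightarrow> ereal"
  shows "(INF i\<in>I. f i + ereal c) = (INF i\<in>I. f i) + ereal c"
proof (rule antisym)
  show "(INF i\<in>I. f i) + ereal c \<le> (INF i\<in>I. f i + ereal c)"
    by (rule INF_greatest) (intro add_right_mono INF_lower)
  have "(INF i\<in>I. f i + ereal c) + ereal (-c) \<le> (INF i\<in>I. f i)"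
  proof (rule INF_greatest)
    fix i assume "i \<in> I"
    then have "(INF i\<in>I. f i + ereal c) \<le> f i + ereal c" by (rule INF_lower)
    then have "(INF i\<in>I. f i + ereal c) + ereal (-c) \<le> f i + ereal c + ereal (-c)"
      by (rule add_right_mono)
    also have "\<dots> = f i" by (cases "f i") auto
    finally show "(INF i\<in>I. f i + ereal c) + ereal (-c) \<le> f i" .
  qed
  then have "(INF i\<in>I. f i + ereal c) + ereal (-c) + ereal c \<le> (INF i\<in>I. f i) + ereal c"
    by (rule add_right_mono)
  moreover have "(INF i\<in>I. f i + ereal c) + ereal (-c) + ereal c = (INF i\<in>I. f i + ereal c)"
    by (cases "(INF i\<in>I. f i + ereal c)") auto
  ultimately show "(INF i\<in>I. f i + ereal c) \<le> (INF i\<in>I. f i) + ereal c" by simp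
qed

lemma walk_weight_Cons2:
  "walk_weight w (a # b # p) = w (a, b) + walk_weight w (b # p)"
  unfolding walk_weight_def by (simp del: sum.lessThan_Suc add: sum.lessThan_Suc_shift)

lemma is_walk_Cons2:
  "is_walk E (a # b # p) \<longleftrightarrow> (a, b) \<in> E \<and> is_walk E (b # p)"
  unfolding is_walk_def by (auto simp: less_Suc_eq_0_disj)

lemma is_walk_single: "is_walk E [a]"
  unfolding is_walk_def by simp

definition shE :: "nat \<Rightarrow> (nat \<times> nat) set \<Rightarrow> (nat \<times> nat) set" where
  "shE n E = {(i, i + Suc n) | i. i \<in> {1..n}} \<union> (\<lambda>(a,b). (a + Suc n, b + Suc n)) ` E"

definition shw :: "nat \<Rightarrow> (nat \<Rightarrow> real) \<Rightarrow> (nat \<times> nat \<Rightarrow> real) \<Rightarrow> (nat \<times> nat \<Rightarrow> real)" where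
  "shw n x w = (\<lambda>(a,b). if a < Suc n then x a else w (a - Suc n, b - Suc n))"

lemma shE_shift: "(Suc (a + n), b) \<in> shE n E \<longleftrightarrow> (\<exists>b0. b = Suc (b0 + n) \<and> (a, b0) \<in> E)"
  unfolding shE_def by auto

lemma shE_low: "a < Suc n \<Longrightarrow> (a, b) \<in> shE n E \<longleftrightarrow> a \<in> {1..n} \<and> b = a + Suc n"
  unfolding shE_def by auto

lemma shE_target: "(a, b) \<in> shE n E \<Longrightarrow> b \<ge> Suc n"
  unfolding shE_def by auto

lemma walk_map_sh: "is_walk (shE n E) (map (\<lambda>v. v + Suc n) p) \<longleftrightarrow> is_walk E p"
proof (induction p)
  case Nil then show ?case by (simp add: is_walk_def)
next
  case (Cons a p)
  show ?case
  proof (cases p)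
    case Nil then show ?thesis by (simp add: is_walk_single)
  next
    case (Cons b q)
    then show ?thesis using Cons.IH by (simp add: is_walk_Cons2 shE_shift)
  qed
qed

lemma weight_map_sh: "walk_weight (shw n x w) (map (\<lambda>v. v + Suc n) p) = walk_weight w p"
  unfolding walk_weight_def shw_def by (intro sum.cong) auto

lemma walk_high:
  "is_walk (shE n E) q \<Longrightarrow> hd q \<ge> Suc n \<Longrightarrow> \<exists>p. q = map (\<lambda>v. v + Suc n) p \<and> is_walk E p"
proof (induction q)
  case Nil then show ?case by (simp add: is_walk_def)
next
  case (Cons a rest)
  obtain a0 where a0: "a = a0 + Suc n" using Cons.prems(2) by (metis le_add_diff_inverse2 list.sel(1))
  show ?case
  proof (cases rest)
    case Nil then show ?thesis using a0 by (intro exI[of _ "[a0]"]) (simp add: is_walk_single)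
  next
    case (Cons b rest')
    with Cons.prems a0 obtain b0 where b0: "b = b0 + Suc n" "(a0, b0) \<in> E"
      and w: "is_walk (shE n E) rest" by (auto simp: is_walk_Cons2 shE_shift)
    have "hd rest \<ge> Suc n" using Cons b0 by simp
    from Cons.IH[OF w this] obtain p where p: "rest = map (\<lambda>v. v + Suc n) p" "is_walk E p"
      by blast
    have "Cons a rest = map (\<lambda>v. v + Suc n) (a0 # p)" using a0 p by simp
    moreover have "is_walk E (a0 # p)"
      using Cons.prems(1) calculation walk_map_sh[of n E "a0 # p"] by simp
    ultimately show ?thesis by (intro exI[of _ "a0 # p"]) simp
  qed
qed

lemma link_fwd:
  assumes L: "is_linking E I J P" and I: "I \<subseteq> {1..n}"
  shows "is_linking (shE n E) I ((\<lambda>v. v + Suc n) ` J) (\<lambda>i. i # map (\<lambda>v. v + Suc n) (P i))"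
proof -
  let ?sh = "\<lambda>v::nat. v + Suc n"
  have inj: "inj ?sh" by (auto simp: inj_def)
  have fin: "finite I" and cd: "card I = card J"
    and pth: "\<And>i. i \<in> I \<Longrightarrow> is_path E (P i) \<and> hd (P i) = i"
    and img: "(\<lambda>i. last (P i)) ` I = J"
    and dsj: "\<And>i i'. i \<in> I \<Longrightarrow> i' \<in> I \<Longrightarrow> i \<noteq> i' \<Longrightarrow> set (P i) \<inter> set (P i') = {}"
    using L unfolding is_linking_def by auto
  have ne: "\<And>i. i \<in> I \<Longrightarrow> P i \<noteq> []" using pth unfolding is_path_def is_walk_def by auto
  have path': "is_path (shE n E) (i # map ?sh (P i))" if iI: "i \<in> I" for i
  proof -
    obtain rest where Pi: "P i = i # rest" using ne[OF iI] pth[OF iI]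
      by (metis list.collapse)
    have "is_walk E (P i)" using pth[OF iI] by (simp add: is_path_def)
    then have w: "is_walk (shE n E) (map ?sh (P i))" by (simp only: walk_map_sh)
    have e: "(i, i + Suc n) \<in> shE n E" using I iI unfolding shE_def by auto
    have "is_walk (shE n E) (i # map ?sh (P i))"
      using w e Pi by (simp add: is_walk_Cons2)
    moreover have "distinct (i # map ?sh (P i))"
      using pth[OF iI] inj I iI by (auto simp: is_path_def distinct_map inj_on_def)
    ultimately show ?thesis by (simp add: is_path_def)
  qed
  have lst: "(\<lambda>i. last (i # map ?sh (P i))) ` I = ?sh ` J"
  proof -
    have "(\<lambda>i. last (i # map ?sh (P i))) ` I = ?sh ` ((\<lambda>i. last (P i)) ` I)"
      using ne by (force simp: last_map image_iff)
    then show ?thesis using img by simp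
  qed
  have dsj': "set (i # map ?sh (P i)) \<inter> set (i' # map ?sh (P i')) = {}"
    if "i \<in> I" "i' \<in> I" "i \<noteq> i'" for i i'
  proof -
    have "i \<le> n" "i' \<le> n" using I that by auto
    moreover have "?sh ` set (P i) \<inter> ?sh ` set (P i') = {}"
      using dsj[OF that] inj by (simp add: image_Int[symmetric])
    ultimately show ?thesis using that(3) by auto
  qed
  show ?thesis unfolding is_linking_def
    using fin cd card_image[OF inj_on_subset[OF inj subset_UNIV], of J] path' lst dsj' by auto
qed

lemma link_bwd:
  assumes L: "is_linking (shE n E) I ((\<lambda>v. v + Suc n) ` J) Q" and I: "I \<subseteq> {1..n}"
  shows "\<exists>P. is_linking E I J P \<and> (\<forall>i\<in>I. Q i = i # map (\<lambda>v. v + Suc n) (P i))"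
proof -
  let ?sh = "\<lambda>v::nat. v + Suc n"
  have inj: "inj ?sh" by (auto simp: inj_def)
  have fin: "finite I" and cd: "card I = card (?sh ` J)"
    and pth: "\<And>i. i \<in> I \<Longrightarrow> is_path (shE n E) (Q i) \<and> hd (Q i) = i"
    and img: "(\<lambda>i. last (Q i)) ` I = ?sh ` J"
    and dsj: "\<And>i i'. i \<in> I \<Longrightarrow> i' \<in> I \<Longrightarrow> i \<noteq> i' \<Longrightarrow> set (Q i) \<inter> set (Q i') = {}"
    using L unfolding is_linking_def by auto
  have one: "\<exists>p. Q i = i # map ?sh p \<and> is_path E p \<and> hd p = i" if iI: "i \<in> I" for i
  proof -
    have ne: "Q i \<noteq> []" using pth[OF iI] by (simp add: is_path_def is_walk_def)
    then obtain rest where Qi: "Q i = i # rest" using pth[OF iI] by (metis list.collapse)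
    have "last (Q i) \<in> ?sh ` J" using img iI by blast
    then have lb: "last (Q i) \<ge> Suc n" by auto
    have "i \<le> n" using I iI by auto
    then have "rest \<noteq> []" using lb Qi by auto
    then obtain b rest' where r: "rest = b # rest'" by (cases rest) auto
    have wq: "is_walk (shE n E) (Q i)" and dq: "distinct (Q i)" using pth[OF iI] by (auto simp: is_path_def)
    then have e: "(i, b) \<in> shE n E" and wr: "is_walk (shE n E) rest"
      using Qi r by (auto simp: is_walk_Cons2)
    have b: "b = i + Suc n" using e shE_low[of i n b E] \<open>i \<le> n\<close> by auto
    then have "hd rest \<ge> Suc n" using r by simp
    from walk_high[OF wr this] obtain p where p: "rest = map ?sh p" "is_walk E p" by blast
    have "distinct p" using dq Qi p by (simp add: distinct_map)
    moreover have "hd p = i" using p r b by (cases p) auto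
    ultimately show ?thesis using p Qi by (auto simp: is_path_def)
  qed
  then obtain P where P: "\<And>i. i \<in> I \<Longrightarrow> Q i = i # map ?sh (P i) \<and> is_path E (P i) \<and> hd (P i) = i"
    by metis
  have ne: "\<And>i. i \<in> I \<Longrightarrow> P i \<noteq> []" using P unfolding is_path_def is_walk_def by auto
  have "?sh ` ((\<lambda>i. last (P i)) ` I) = (\<lambda>i. last (Q i)) ` I"
    using ne P by (force simp: last_map image_iff)
  then have lst: "(\<lambda>i. last (P i)) ` I = J" using img inj by (simp add: inj_image_eq_iff)
  have dsj': "set (P i) \<inter> set (P i') = {}" if "i \<in> I" "i' \<in> I" "i \<noteq> i'" for i i'
  proof -
    have "?sh ` set (P i) \<subseteq> set (Q i)" "?sh ` set (P i') \<subseteq> set (Q i')"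
      using P that by auto
    then have "?sh ` set (P i) \<inter> ?sh ` set (P i') = {}" using dsj[OF that] by blast
    then show ?thesis by auto
  qed
  have "card I = card J" using cd card_image[OF inj_on_subset[OF inj subset_UNIV], of J] by simp
  then have "is_linking E I J P" unfolding is_linking_def using fin P lst dsj' by auto
  then show ?thesis using P by blast
qed

lemma weight_shift:
  assumes "i \<le> n" "p \<noteq> []" "hd p = i"
  shows "walk_weight (shw n x w) (i # map (\<lambda>v. v + Suc n) p) = x i + walk_weight w p"
proof -
  obtain rest where p: "p = i # rest" using assms by (metis list.collapse)
  have "walk_weight (shw n x w) (i # map (\<lambda>v. v + Suc n) p)
      = shw n x w (i, i + Suc n) + walk_weight (shw n x w) (map (\<lambda>v. v + Suc n) p)"
    using p by (simp add: walk_weight_Cons2)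
  also have "\<dots> = x i + walk_weight w p" using assms(1) by (simp only: weight_map_sh) (simp add: shw_def)
  finally show ?thesis .
qed

lemma min_link_shift:
  assumes I: "I \<subseteq> {1..n}"
  shows "min_link_weight (shE n E) (shw n x w) I ((\<lambda>v. v + Suc n) ` J)
       = min_link_weight E w I J + ereal (sum x I)"
proof -
  let ?sh = "\<lambda>v::nat. v + Suc n"
  have wsum: "(\<Sum>i\<in>I. walk_weight (shw n x w) (i # map ?sh (P i)))
      = (\<Sum>i\<in>I. walk_weight w (P i)) + sum x I" if "is_linking E I J P" for P
  proof -
    have "\<And>i. i \<in> I \<Longrightarrow> walk_weight (shw n x w) (i # map ?sh (P i)) = x i + walk_weight w (P i)"
      using that I by (intro weight_shift) (auto simp: is_linking_def is_path_def is_walk_def)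
    then show ?thesis by (simp add: sum.distrib add.commute)
  qed
  have rhs: "min_link_weight E w I J + ereal (sum x I)
      = (INF P\<in>{P. is_linking E I J P}. ereal ((\<Sum>i\<in>I. walk_weight w (P i)) + sum x I))"
    unfolding min_link_weight_def by (simp add: INF_add_real[symmetric])
  show ?thesis unfolding rhs
  proof (rule antisym)
    show "min_link_weight (shE n E) (shw n x w) I (?sh ` J)
      \<le> (INF P\<in>{P. is_linking E I J P}. ereal ((\<Sum>i\<in>I. walk_weight w (P i)) + sum x I))"
    proof (rule INF_greatest)
      fix P assume "P \<in> {P. is_linking E I J P}"
      then have L: "is_linking E I J P" by simp
      have "min_link_weight (shE n E) (shw n x w) I (?sh ` J)
          \<le> ereal (\<Sum>i\<in>I. walk_weight (shw n x w) (i # map ?sh (P i)))"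
        unfolding min_link_weight_def
        using link_fwd[OF L I] by (intro INF_lower2[of "\<lambda>i. i # map ?sh (P i)"]) auto
      then show "min_link_weight (shE n E) (shw n x w) I (?sh ` J)
          \<le> ereal ((\<Sum>i\<in>I. walk_weight w (P i)) + sum x I)" using wsum[OF L] by simp
    qed
  next
    show "(INF P\<in>{P. is_linking E I J P}. ereal ((\<Sum>i\<in>I. walk_weight w (P i)) + sum x I))
       \<le> min_link_weight (shE n E) (shw n x w) I (?sh ` J)"
      unfolding min_link_weight_def
    proof (rule INF_greatest)
      fix Q assume "Q \<in> {P. is_linking (shE n E) I (?sh ` J) P}"
      then obtain P where L: "is_linking E I J P" and Q: "\<forall>i\<in>I. Q i = i # map ?sh (P i)"
        using link_bwd[OF _ I] by blast
      have "(\<Sum>i\<in>I. walk_weight (shw n x w) (Q i)) = (\<Sum>i\<in>I. walk_weight (shw n x w) (i # map ?sh (P i)))"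
        using Q by simp
      then have "ereal (\<Sum>i\<in>I. walk_weight (shw n x w) (Q i)) = ereal ((\<Sum>i\<in>I. walk_weight w (P i)) + sum x I)"
        using wsum[OF L] by simp
      then show "(INF P\<in>{P. is_linking E I J P}. ereal ((\<Sum>i\<in>I. walk_weight w (P i)) + sum x I))
          \<le> ereal (\<Sum>i\<in>I. walk_weight (shw n x w) (Q i))"
        using L by (intro INF_lower2[of P]) auto
    qed
  qed
qed

lemma no_neg_shift:
  assumes "no_neg_cycle E w"
  shows "no_neg_cycle (shE n E) (shw n x w)"
  unfolding no_neg_cycle_def
proof (intro allI impI)
  let ?sh = "\<lambda>v::nat. v + Suc n"
  fix q assume q: "is_walk (shE n E) q \<and> 2 \<le> length q \<and> hd q = last q"
  then have "(q ! (length q - 2), q ! Suc (length q - 2)) \<in> shE n E"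
    unfolding is_walk_def by auto
  then have "q ! Suc (length q - 2) \<ge> Suc n" by (rule shE_target)
  moreover have "Suc (length q - 2) = length q - 1" using q by auto
  moreover have "last q = q ! (length q - 1)" using q last_conv_nth[of q] by (cases q) auto
  ultimately have "hd q \<ge> Suc n" using q by simp
  with q obtain p where p: "q = map ?sh p" "is_walk E p" using walk_high by blast
  have "p \<noteq> []" using p q by auto
  then have "hd p = last p" using q p by (simp add: hd_map last_map)
  then have "walk_weight w p \<ge> 0" using assms p q unfolding no_neg_cycle_def by auto
  then show "walk_weight (shw n x w) q \<ge> 0" using p by (simp only: weight_map_sh)
qed

theorem proposition7p3:
  fixes n :: nat and mus :: "(nat set \<Rightarrow> ereal) list" and x :: "nat \<Rightarrow> real"
  assumes "valuated_flag_gammoid n mus"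
  shows "valuated_flag_gammoid n (map (translate_val x) mus)"
proof -
  let ?sh = "\<lambda>v::nat. v + Suc n"
  have inj: "inj ?sh" by (auto simp: inj_def)
  obtain V E w S where fV: "finite V" and nV: "{1..n} \<subseteq> V" and EV: "E \<subseteq> V \<times> V"
    and nc: "no_neg_cycle E w" and len: "length S = length mus"
    and SV: "\<forall>j < length S. S ! j \<subseteq> V"
    and Smono: "\<forall>j. Suc j < length S \<longrightarrow> S ! j \<subset> S ! Suc j"
    and Slink: "\<forall>j < length S. \<exists>I \<subseteq> {1..n}. \<exists>P. is_linking E I (S ! j) P"
    and mu: "\<forall>j < length mus. \<forall>I. I \<subseteq> {1..n} \<and> card I = card (S ! j) \<longrightarrow>
            (mus ! j) I = min_link_weight E w I (S ! j)"
    using assms unfolding valuated_flag_gammoid_def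
    by (elim exE conjE) (rule that; assumption)
  define V' where "V' = {1..n} \<union> ?sh ` V"
  define S' where "S' = map (\<lambda>A. ?sh ` A) S"
  have c1: "finite V'" "{1..n} \<subseteq> V'" using fV unfolding V'_def by auto
  have c2: "shE n E \<subseteq> V' \<times> V'" using EV nV unfolding V'_def shE_def by auto
  have c3: "no_neg_cycle (shE n E) (shw n x w)" using nc by (rule no_neg_shift)
  have c4: "length S' = length (map (translate_val x) mus)" using len by (simp add: S'_def)
  have c5: "\<forall>j < length S'. S' ! j \<subseteq> V'" using SV unfolding S'_def V'_def by auto
  have c6: "\<forall>j. Suc j < length S' \<longrightarrow> S' ! j \<subset> S' ! Suc j"
  proof (intro allI impI)
    fix j assume "Suc j < length S'"
    then have "S ! j \<subset> S ! Suc j" using Smono by (simp add: S'_def)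
    then show "S' ! j \<subset> S' ! Suc j" using \<open>Suc j < length S'\<close> inj
      by (simp add: S'_def inj_image_subset_iff psubset_eq inj_image_eq_iff)
  qed
  have c7: "\<forall>j < length S'. \<exists>I \<subseteq> {1..n}. \<exists>P. is_linking (shE n E) I (S' ! j) P"
  proof (intro allI impI)
    fix j assume "j < length S'"
    then have jS: "j < length S" by (simp add: S'_def)
    then obtain I P where I: "I \<subseteq> {1..n}" and L: "is_linking E I (S ! j) P" using Slink by blast
    have "S' ! j = ?sh ` (S ! j)" using jS by (simp add: S'_def)
    then have "is_linking (shE n E) I (S' ! j) (\<lambda>i. i # map ?sh (P i))"
      using link_fwd[OF L I] by simp
    then show "\<exists>I \<subseteq> {1..n}. \<exists>P. is_linking (shE n E) I (S' ! j) P"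
      using I by blast
  qed
  have c8: "\<forall>j < length (map (translate_val x) mus). \<forall>I. I \<subseteq> {1..n} \<and> card I = card (S' ! j) \<longrightarrow>
            (map (translate_val x) mus ! j) I = min_link_weight (shE n E) (shw n x w) I (S' ! j)"
  proof (intro allI impI)
    fix j I assume j: "j < length (map (translate_val x) mus)"
      and I: "I \<subseteq> {1..n} \<and> card I = card (S' ! j)"
    have jS: "j < length S" using j len by simp
    have "card (S' ! j) = card (S ! j)" using jS
      by (simp add: S'_def card_image inj_on_def)
    then have "(mus ! j) I = min_link_weight E w I (S ! j)" using mu j I by auto
    then show "(map (translate_val x) mus ! j) I = min_link_weight (shE n E) (shw n x w) I (S' ! j)"
      using j jS I min_link_shift[of I n E x w "S ! j"] by (simp add: translate_val_def S'_def)
  qed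
  show ?thesis unfolding valuated_flag_gammoid_def
    apply (rule exI[of _ V'], rule exI[of _ "shE n E"], rule exI[of _ "shw n x w"], rule exI[of _ S'])
    using c1 c2 c3 c4 c5 c6 c7 c8 by (intro conjI)
qed

end
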